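(* Let $B$ be a Lie algebra over a field $k$ satisfying $\Phi1$: $\forall x_1,\dots,x_4\ (x_1x_2)(x_3x_4)=0$, $\Phi2$: $\forall x,y\ (xyx=0\wedge xyy=0\to xy=0)$ and $\Phi3$: $\forall x,y,z\ (x\ne0\wedge xy=0\wedge xz=0\to yz=0)$. Let $a\in B\setminus\mathrm{Fit}(B)$. Then $ab\ne0$ for every nonzero $b\in\mathrm{Fit}(B)$.
   Context: Products are left-normed: $xyx=(xy)x$. $\mathrm{Fit}(B)$ is the sum of all nilpotent ideals of $B$. *)

theory Defs
  imports Main "HOL.Vector_Spaces"
begin

text \<open>A Lie algebra over a field: a vector space (given by its scalar multiplication)
  with a bilinear, alternating bracket satisfying the Jacobi identity.
  The whole type 'b is the carrier B.\<close>

definition lie_algebra :: "('k::field \<Rightarrow> 'b::ab_group_add \<Rightarrow> 'b) \<Rightarrow> ('b \<Rightarrow> 'b \<Rightarrow> 'b) \<Rightarrow> bool" where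
  "lie_algebra scale br \<longleftrightarrow>
     vector_space scale \<and>
     (\<forall>x y z. br (x + y) z = br x z + br y z) \<and>
     (\<forall>x y z. br x (y + z) = br x y + br x z) \<and>
     (\<forall>c x y. br (scale c x) y = scale c (br x y)) \<and>
     (\<forall>c x y. br x (scale c y) = scale c (br x y)) \<and>
     (\<forall>x. br x x = 0) \<and>
     (\<forall>x y z. br x (br y z) + br y (br z x) + br z (br x y) = 0)"

definition lie_ideal :: "('k::field \<Rightarrow> 'b::ab_group_add \<Rightarrow> 'b) \<Rightarrow> ('b \<Rightarrow> 'b \<Rightarrow> 'b) \<Rightarrow> 'b set \<Rightarrow> bool" where
  "lie_ideal scale br I \<longleftrightarrow> module.subspace scale I \<and>
     (\<forall>x\<in>I. \<forall>y. br x y \<in> I \<and> br y x \<in> I)"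

text \<open>Lower central series of a subalgebra I: I^1 = I, I^(n+1) = span [I^n, I]
  (index shifted: lcs I 0 = I).\<close>
fun lcs :: "('k::field \<Rightarrow> 'b::ab_group_add \<Rightarrow> 'b) \<Rightarrow> ('b \<Rightarrow> 'b \<Rightarrow> 'b) \<Rightarrow> 'b set \<Rightarrow> nat \<Rightarrow> 'b set" where
  "lcs scale br I 0 = I"
| "lcs scale br I (Suc n) = module.span scale {br x y | x y. x \<in> lcs scale br I n \<and> y \<in> I}"

definition nilpotent_ideal :: "('k::field \<Rightarrow> 'b::ab_group_add \<Rightarrow> 'b) \<Rightarrow> ('b \<Rightarrow> 'b \<Rightarrow> 'b) \<Rightarrow> 'b set \<Rightarrow> bool" where
  "nilpotent_ideal scale br I \<longleftrightarrow> lie_ideal scale br I \<and> (\<exists>n. lcs scale br I n = {0})"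

text \<open>Fitting radical: the sum of all nilpotent ideals, i.e. the span of their union.\<close>
definition Fit :: "('k::field \<Rightarrow> 'b::ab_group_add \<Rightarrow> 'b) \<Rightarrow> ('b \<Rightarrow> 'b \<Rightarrow> 'b) \<Rightarrow> 'b set" where
  "Fit scale br = module.span scale (\<Union>{I. nilpotent_ideal scale br I})"

end

theory Submission
  imports Defs
begin

lemma br_basics:
  assumes lie: "lie_algebra scale br"
  shows "br 0 y = 0" "br y 0 = 0" "br x y = - br y x"
proof -
  have add1: "\<And>x y z. br (x + y) z = br x z + br y z"
   and add2: "\<And>x y z. br x (y + z) = br x y + br x z"
   and alt: "\<And>x. br x x = 0" using lie unfolding lie_algebra_def by auto
  have "br (0+0) y = br 0 y + br 0 y" by (rule add1)
  then show "br 0 y = 0" by simp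
  have "br y (0+0) = br y 0 + br y 0" by (rule add2)
  then show "br y 0 = 0" by simp
  have "br (x+y) (x+y) = br x x + br x y + (br y x + br y y)"
    by (simp add: add1 add2)
  then have "0 = br x y + br y x" using alt by simp
  then show "br x y = - br y x" by (simp add: eq_neg_iff_add_eq_0)
qed

lemma nil_ideal_kills:
  assumes lie: "lie_algebra scale br"
    and Phi1: "\<forall>x1 x2 x3 x4. br (br x1 x2) (br x3 x4) = 0"
    and Phi2: "\<forall>x y. br (br x y) x = 0 \<and> br (br x y) y = 0 \<longrightarrow> br x y = 0"
    and I: "nilpotent_ideal scale br I" and x: "x \<in> I"
  shows "br (br y z) x = 0"
proof -
  interpret vector_space scale using lie unfolding lie_algebra_def by auto
  obtain n where n: "lcs scale br I n = {0}" using I unfolding nilpotent_ideal_def by auto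
  have idl: "\<forall>x\<in>I. \<forall>y. br x y \<in> I \<and> br y x \<in> I"
    using I unfolding nilpotent_ideal_def lie_ideal_def by auto
  define w where "w k = ((\<lambda>v. br v x) ^^ k) (br y z)" for k
  have wS: "w (Suc k) = br (w k) x" for k by (simp add: w_def)
  have wP: "\<exists>p q. w k = br p q" for k by (cases k) (auto simp: w_def)
  have inl: "w (Suc k) \<in> lcs scale br I k" for k
  proof (induction k)
    case 0 then show ?case using idl x by (simp add: wS w_def)
  next
    case (Suc k)
    then have "w (Suc (Suc k)) \<in> {br x' y' | x' y'. x' \<in> lcs scale br I k \<and> y' \<in> I}"
      using x wS by blast
    then show ?case by (simp add: span_base)
  qed
  have wn: "w (Suc n) = 0" using inl[of n] n by auto
  have step: "w (Suc (Suc k)) = 0 \<Longrightarrow> w (Suc k) = 0" for k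
  proof -
    assume h: "w (Suc (Suc k)) = 0"
    obtain p q where pq: "w k = br p q" using wP by blast
    have "br (br (w k) x) (w k) = 0" using Phi1 pq by (metis wS wP)
    moreover have "br (br (w k) x) x = 0" using h wS by simp
    ultimately have "br (w k) x = 0" using Phi2 by blast
    then show ?thesis using wS by simp
  qed
  have "\<forall>j. w (Suc j) = 0 \<longrightarrow> w 1 = 0"
  proof
    fix j show "w (Suc j) = 0 \<longrightarrow> w 1 = 0"
      by (induction j) (auto dest: step)
  qed
  then have "w 1 = 0" using wn by blast
  then show ?thesis by (simp add: w_def)
qed

theorem lemma3p2:
  fixes scale :: "'k::field \<Rightarrow> 'b::ab_group_add \<Rightarrow> 'b"
    and br :: "'b \<Rightarrow> 'b \<Rightarrow> 'b"
    and a :: 'b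
  assumes lie: "lie_algebra scale br"
    and Phi1: "\<forall>x1 x2 x3 x4. br (br x1 x2) (br x3 x4) = 0"
    and Phi2: "\<forall>x y. br (br x y) x = 0 \<and> br (br x y) y = 0 \<longrightarrow> br x y = 0"
    and Phi3: "\<forall>x y z. x \<noteq> 0 \<and> br x y = 0 \<and> br x z = 0 \<longrightarrow> br y z = 0"
    and a: "a \<notin> Fit scale br"
  shows "\<forall>b\<in>Fit scale br. b \<noteq> 0 \<longrightarrow> br a b \<noteq> 0"
proof (intro ballI impI notI)
  interpret vector_space scale using lie unfolding lie_algebra_def by auto
  have add1: "\<And>x y z. br (x + y) z = br x z + br y z"
   and add2: "\<And>x y z. br x (y + z) = br x y + br x z"
   and sc1: "\<And>c x y. br (scale c x) y = scale c (br x y)"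
   and sc2: "\<And>c x y. br x (scale c y) = scale c (br x y)"
    using lie unfolding lie_algebra_def by auto
  note bb = br_basics[OF lie]
  fix b assume bF: "b \<in> Fit scale br" and b0: "b \<noteq> 0" and ab: "br a b = 0"
  define D where "D = {x. \<forall>y z. br (br y z) x = 0}"
  have subD: "subspace D" unfolding subspace_def D_def
    by (auto simp: bb(1) bb(2) add2 sc2)
  have "\<Union>{I. nilpotent_ideal scale br I} \<subseteq> D"
    unfolding D_def using nil_ideal_kills[OF lie Phi1 Phi2] by blast
  then have "Fit scale br \<subseteq> D" unfolding Fit_def using span_minimal subD by blast
  then have bD: "br (br y z) b = 0" for y z using bF unfolding D_def by blast
  have ba: "br b a = 0" using ab bb(3)[of b a] by simp
  have aD: "br a (br y z) = 0" for y z
  proof -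
    have h: "br b (br y z) = 0" using bD[of y z] bb(3)[of b "br y z"] by simp
    have "b \<noteq> 0 \<and> br b a = 0 \<and> br b (br y z) = 0 \<longrightarrow> br a (br y z) = 0"
      using Phi3 by blast
    then show ?thesis using h b0 ba by blast
  qed
  define E where "E = {x. \<forall>y z. br x (br y z) = 0}"
  have subE: "subspace E" unfolding subspace_def E_def
    by (auto simp: bb(1) bb(2) add1 sc1)
  have aE: "a \<in> E" using aD E_def by auto
  have "\<forall>x\<in>E. \<forall>y. br x y \<in> E \<and> br y x \<in> E"
    unfolding E_def using Phi1 by blast
  then have idE: "lie_ideal scale br E" unfolding lie_ideal_def
    using subE by blast
  have l1: "lcs scale br E 1 \<subseteq> span {br y z | y z. True}"
    by (auto intro!: span_mono)
  have kill: "br p q = 0" if p: "p \<in> span {br y z | y z. True}" and q: "q \<in> E" for p q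
  proof -
    have "subspace {p. br q p = 0}" unfolding subspace_def
      by (auto simp: bb(1) bb(2) add2 sc2)
    moreover have "{br y z | y z. True} \<subseteq> {p. br q p = 0}" using q E_def by auto
    ultimately have "br q p = 0" using span_minimal p by blast
    then show ?thesis using bb(3)[of p q] by simp
  qed
  have "lcs scale br E 2 \<subseteq> {0}"
  proof -
    have "{br x y | x y. x \<in> lcs scale br E 1 \<and> y \<in> E} \<subseteq> {0}"
      using kill l1 by blast
    moreover have "subspace {0}" by (simp add: subspace_def)
    ultimately show ?thesis using span_minimal by (simp add: numeral_2_eq_2)
  qed
  moreover have "0 \<in> lcs scale br E 2" by (simp add: numeral_2_eq_2 span_zero)
  ultimately have "lcs scale br E 2 = {0}" by blast
  then have "nilpotent_ideal scale br E" using idE unfolding nilpotent_ideal_def by blast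
  then have "a \<in> Fit scale br" unfolding Fit_def using aE by (blast intro: span_base)
  then show False using a by simp
qed

end
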